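(* Let $d>1$, let $n$ be a square-free positive integer and $r\mid n$. Let $\boldsymbol\tau=(\tau_1,\tau_2)\in\mathbb H^2$ and let $T_{\boldsymbol\tau}=\mathbb C^2/\Lambda_{\mathfrak b_r,\boldsymbol\tau}$ be the associated $(1,n)$-polarised abelian surface with real multiplication by $\mathcal O_{d^2}$. Let $E_1=\mathbb C\times\{0\}/(\Lambda_{\mathfrak b_r,\boldsymbol\tau}\cap(\mathbb C\times\{0\}))$ and $E_2=\{0\}\times\mathbb C/(\Lambda_{\mathfrak b_r,\boldsymbol\tau}\cap(\{0\}\times\mathbb C))$ be the elliptic curves in $T_{\boldsymbol\tau}$ generated by the eigenforms $du_1,du_2$. Then the restriction of the $(1,n)$-polarisation $\mathcal L$ of $T_{\boldsymbol\tau}$ satisfies $$\mathcal L|_{E_1}=\operatorname{lcm}(d,r)\cdot\mathcal O_{E_1}(0),\qquad \mathcal L|_{E_2}=\operatorname{lcm}(d,\tfrac nr)\cdot\mathcal O_{E_2}(0).$$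
   Context: $\mathcal O_{d^2}=\{(a_1,a_2)\in\mathbb Z^2:a_1\equiv a_2\bmod d\}\subset\mathbb Q\oplus\mathbb Q$ with componentwise multiplication; trace $\operatorname{tr}(a)=a_1+a_2$; $\mathcal O_{d^2}^\vee=\{x\in\mathbb Q^2:\operatorname{tr}(x\mathcal O_{d^2})\subset\mathbb Z\}=\langle\frac1d(1,-1),(0,1)\rangle_{\mathbb Z}$. For square-free $n$ and $r\mid n$, $\mathfrak b_r=\{(a_1,a_2)\in\mathbb Z^2:a_1\equiv a_2\bmod d,\ a_1\equiv0\bmod r,\ a_2\equiv0\bmod n/r\}$. On $\mathfrak b_r\oplus\mathcal O_{d^2}^\vee$ the trace pairing $\langle(a,b),(x,y)\rangle=\operatorname{tr}(ay-bx)=a_1y_1+a_2y_2-b_1x_1-b_2x_2$ is symplectic of type $(1,n)$. For $\boldsymbol\tau\in\mathbb H^2$, $\Lambda_{\mathfrak b_r,\boldsymbol\tau}=\{(a_1+b_1\tau_1,a_2+b_2\tau_2)^T: a\in\mathfrak b_r,b\in\mathcal O_{d^2}^\vee\}\subset\mathbb C^2$; $T_{\boldsymbol\tau}=\mathbb C^2/\Lambda_{\mathfrak b_r,\boldsymbol\tau}$ carries the polarisation $\mathcal L$ given by the trace pairing (transported to the lattice) and real multiplication by $\mathcal O_{d^2}$ acting componentwise; $du_1,du_2$ are the coordinate forms. "$\mathcal L|_{E}=k\,\mathcal O_E(0)$" means the restricted symplectic form on the rank-2 lattice of $E$ is $k$ times a unimodular one. *)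

theory Defs
  imports "HOL-Analysis.Analysis" "HOL-Computational_Algebra.Squarefree"
begin

text \<open>Elements of \<open>\<rat> \<oplus> \<rat>\<close> are represented as pairs of reals with rational entries.\<close>

definition b_ideal :: "nat \<Rightarrow> nat \<Rightarrow> nat \<Rightarrow> (real \<times> real) set" where
  "b_ideal d n r = {(of_int a1, of_int a2) | a1 a2 :: int.
      a1 mod int d = a2 mod int d \<and> int r dvd a1 \<and> int (n div r) dvd a2}"

definition O_dual :: "nat \<Rightarrow> (real \<times> real) set" where
  "O_dual d = {(of_int k / real d, - of_int k / real d + of_int m) | k m :: int. True}"

definition lattice_map :: "complex \<times> complex \<Rightarrow> (real \<times> real) \<times> (real \<times> real) \<Rightarrow> complex \<times> complex" where
  "lattice_map \<tau> p = (case p of ((a1, a2), (b1, b2)) \<Rightarrow>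
      (of_real a1 + of_real b1 * fst \<tau>, of_real a2 + of_real b2 * snd \<tau>))"

definition Lambda :: "nat \<Rightarrow> nat \<Rightarrow> nat \<Rightarrow> complex \<times> complex \<Rightarrow> (complex \<times> complex) set" where
  "Lambda d n r \<tau> = lattice_map \<tau> ` (b_ideal d n r \<times> O_dual d)"

text \<open>Coordinates: the inverse of \<open>lattice_map \<tau>\<close> (an R-linear isomorphism \<open>\<real>^4 \<rightarrow> \<complex>^2\<close>
  for \<open>\<tau> \<in> \<H>^2\<close>).\<close>
definition coord_b :: "complex \<Rightarrow> complex \<Rightarrow> real" where
  "coord_b t z = Im z / Im t"
definition coord_a :: "complex \<Rightarrow> complex \<Rightarrow> real" where
  "coord_a t z = Re z - coord_b t z * Re t"

text \<open>The polarisation: the trace pairing \<open>tr(a y - b x)\<close> transported to \<open>\<complex>^2\<close>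
  (R-bilinear extension of its values on the lattice).\<close>
definition pol_form :: "complex \<times> complex \<Rightarrow> complex \<times> complex \<Rightarrow> complex \<times> complex \<Rightarrow> real" where
  "pol_form \<tau> v w =
     coord_a (fst \<tau>) (fst v) * coord_b (fst \<tau>) (fst w)
   + coord_a (snd \<tau>) (snd v) * coord_b (snd \<tau>) (snd w)
   - coord_b (fst \<tau>) (fst v) * coord_a (fst \<tau>) (fst w)
   - coord_b (snd \<tau>) (snd v) * coord_a (snd \<tau>) (snd w)"

text \<open>A symplectic form restricted to a rank-2 lattice \<open>S\<close> is \<open>k\<close> times a unimodular one:
  \<open>S\<close> has a \<open>\<int>\<close>-basis \<open>e, f\<close> with \<open>E(e,f) = k\<close>.\<close>
definition is_k_times_unimodular ::
  "('v::real_vector) set \<Rightarrow> ('v \<Rightarrow> 'v \<Rightarrow> real) \<Rightarrow> int \<Rightarrow> bool" where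
  "is_k_times_unimodular S E k \<longleftrightarrow>
     (\<exists>e f. (\<forall>x. x \<in> S \<longleftrightarrow> (\<exists>m l :: int. x = of_int m *\<^sub>R e + of_int l *\<^sub>R f))
          \<and> (\<forall>m l :: int. of_int m *\<^sub>R e + of_int l *\<^sub>R f = 0 \<longrightarrow> m = 0 \<and> l = 0)
          \<and> E e f = of_int k)"

end

theory Submission
  imports Defs
begin

lemma cz: fixes a b :: real and t :: complex
  assumes "Im t > 0" "of_real a + of_real b * t = 0" shows "a = 0 \<and> b = 0"
proof -
  have "Im (of_real a + of_real b * t) = b * Im t" by simp
  with assms have b: "b = 0" by simp
  with assms show ?thesis by simp
qed

lemma mem1:
  assumes d: "d > 0" and t: "Im (fst \<tau>) > 0" "Im (snd \<tau>) > 0"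
  shows "(x \<in> Lambda d n r \<tau> \<and> snd x = 0) \<longleftrightarrow>
    (\<exists>m l::int. x = (of_real (of_int (m * int (lcm d r))) + of_real (of_int l) * fst \<tau>, 0))"
proof
  assume "x \<in> Lambda d n r \<tau> \<and> snd x = 0"
  then obtain a1 a2 k m' where x: "x = (of_real (of_int a1) + of_real (of_int k / real d) * fst \<tau>,
       of_real (of_int a2) + of_real (- of_int k / real d + of_int m') * snd \<tau>)"
    and c: "a1 mod int d = a2 mod int d" "int r dvd a1" "int (n div r) dvd a2"
    and s: "snd x = 0"
    unfolding Lambda_def lattice_map_def b_ideal_def O_dual_def by auto
  from s x cz[OF t(2), of "of_int a2" "- of_int k / real d + of_int m'"]
  have z: "a2 = 0" "- of_int k / real d + of_int m' = 0" by auto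
  hence "real_of_int k = real d * of_int m'" using d by (simp add: field_simps)
  hence k: "of_int k / real d = of_int m'" using d by simp
  have "int d dvd a1" using c(1) z by (simp add: mod_eq_0_iff_dvd)
  with c(2) have "int (lcm d r) dvd a1" by (simp add: lcm_least int_ops(8) flip: lcm_int_int_eq)
  then obtain q where q: "a1 = int (lcm d r) * q" by blast
  show "\<exists>m l::int. x = (of_real (of_int (m * int (lcm d r))) + of_real (of_int l) * fst \<tau>, 0)"
  proof (intro exI)
    show "x = (of_real (of_int (q * int (lcm d r))) + of_real (of_int m') * fst \<tau>, 0)"
    proof (rule prod_eqI)
      have kc: "complex_of_int k / of_nat d = of_int m'"
      proof -
        have "complex_of_int k / of_nat d = of_real (of_int k / real d)" by simp
        also have "\<dots> = of_int m'" using k by simp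
        finally show ?thesis .
      qed
      show "fst x = fst (of_real (of_int (q * int (lcm d r))) + of_real (of_int m') * fst \<tau>, 0::complex)"
        using x q kc by (simp add: mult.commute)
      show "snd x = snd (of_real (of_int (q * int (lcm d r))) + of_real (of_int m') * fst \<tau>, 0::complex)"
        using s by simp
    qed
  qed
next
  assume "\<exists>m l::int. x = (of_real (of_int (m * int (lcm d r))) + of_real (of_int l) * fst \<tau>, 0)"
  then obtain m l :: int where x: "x = (of_real (of_int (m * int (lcm d r))) + of_real (of_int l) * fst \<tau>, 0)" by blast
  have b: "(of_int (m * int (lcm d r)), 0) \<in> b_ideal d n r"
    unfolding b_ideal_def
    by (rule CollectI, rule exI[of _ "m * int (lcm d r)"], rule exI[of _ 0])
       (auto simp: mod_eq_0_iff_dvd)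
  have o: "(of_int l, 0) \<in> O_dual d"
    unfolding O_dual_def using d
    by (intro CollectI exI[of _ "int d * l"] exI[of _ l]) (auto simp: field_simps)
  have "x = lattice_map \<tau> ((of_int (m * int (lcm d r)), 0), (of_int l, 0))"
    unfolding lattice_map_def x by simp
  then have "x \<in> Lambda d n r \<tau>" unfolding Lambda_def using b o by (intro image_eqI) auto
  then show "x \<in> Lambda d n r \<tau> \<and> snd x = 0" using x by simp
qed

lemma mem2:
  assumes d: "d > 0" and t: "Im (fst \<tau>) > 0" "Im (snd \<tau>) > 0"
  shows "(x \<in> Lambda d n r \<tau> \<and> fst x = 0) \<longleftrightarrow>
    (\<exists>m l::int. x = (0, of_real (of_int (m * int (lcm d (n div r)))) + of_real (of_int l) * snd \<tau>))"
proof
  assume "x \<in> Lambda d n r \<tau> \<and> fst x = 0"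
  then obtain a1 a2 k m' where x: "x = (of_real (of_int a1) + of_real (of_int k / real d) * fst \<tau>,
       of_real (of_int a2) + of_real (- of_int k / real d + of_int m') * snd \<tau>)"
    and c: "a1 mod int d = a2 mod int d" "int r dvd a1" "int (n div r) dvd a2"
    and s: "fst x = 0"
    unfolding Lambda_def lattice_map_def b_ideal_def O_dual_def by auto
  from s x cz[OF t(1), of "of_int a1" "of_int k / real d"]
  have z: "a1 = 0" "of_int k / real d = 0" by auto
  hence k: "k = 0" using d by simp
  have "int d dvd a2" using c(1) z by (simp add: mod_eq_0_iff_dvd)
  with c(3) have "int (lcm d (n div r)) dvd a2" by (simp add: lcm_least int_ops(8) flip: lcm_int_int_eq)
  then obtain q where q: "a2 = int (lcm d (n div r)) * q" by blast
  show "\<exists>m l::int. x = (0, of_real (of_int (m * int (lcm d (n div r)))) + of_real (of_int l) * snd \<tau>)"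
  proof (intro exI)
    show "x = (0, of_real (of_int (q * int (lcm d (n div r)))) + of_real (of_int m') * snd \<tau>)"
    proof (rule prod_eqI)
      show "snd x = snd (0::complex, of_real (of_int (q * int (lcm d (n div r)))) + of_real (of_int m') * snd \<tau>)"
        using x q k by (simp add: mult.commute)
      show "fst x = fst (0::complex, of_real (of_int (q * int (lcm d (n div r)))) + of_real (of_int m') * snd \<tau>)"
        using s by simp
    qed
  qed
next
  assume "\<exists>m l::int. x = (0, of_real (of_int (m * int (lcm d (n div r)))) + of_real (of_int l) * snd \<tau>)"
  then obtain m l :: int where x: "x = (0, of_real (of_int (m * int (lcm d (n div r)))) + of_real (of_int l) * snd \<tau>)" by blast
  have b: "(0, of_int (m * int (lcm d (n div r)))) \<in> b_ideal d n r"
    unfolding b_ideal_def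
    by (rule CollectI, rule exI[of _ 0], rule exI[of _ "m * int (lcm d (n div r))"])
       (auto simp: mod_eq_0_iff_dvd)
  have o: "(0, of_int l) \<in> O_dual d"
    unfolding O_dual_def using d
    by (intro CollectI exI[of _ 0] exI[of _ l]) (auto simp: field_simps)
  have "x = lattice_map \<tau> ((0, of_int (m * int (lcm d (n div r)))), (0, of_int l))"
    unfolding lattice_map_def x by simp
  then have "x \<in> Lambda d n r \<tau>" unfolding Lambda_def using b o by (intro image_eqI) auto
  then show "x \<in> Lambda d n r \<tau> \<and> fst x = 0" using x by simp
qed

theorem theorem3p1:
  fixes d n r :: nat and \<tau> :: "complex \<times> complex"
  assumes "d > 1" and "n > 0" and "squarefree n" and "r dvd n"
    and "Im (fst \<tau>) > 0" and "Im (snd \<tau>) > 0"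
  shows "is_k_times_unimodular (Lambda d n r \<tau> \<inter> {v. snd v = 0}) (pol_form \<tau>) (int (lcm d r))
       \<and> is_k_times_unimodular (Lambda d n r \<tau> \<inter> {v. fst v = 0}) (pol_form \<tau>) (int (lcm d (n div r)))"
proof
  have d: "d > 0" using assms by simp
  have rp: "r > 0" using assms by (auto intro: Nat.gr0I)
  have nr: "n div r > 0" using assms rp by (metis dvd_div_eq_0_iff gr0I less_irrefl)
  let ?L = "lcm d r"
  have Lp: "?L > 0" using d rp by (simp add: lcm_pos_nat)
  show "is_k_times_unimodular (Lambda d n r \<tau> \<inter> {v. snd v = 0}) (pol_form \<tau>) (int (lcm d r))"
    unfolding is_k_times_unimodular_def
  proof (intro exI conjI allI)
    fix x
    show "x \<in> Lambda d n r \<tau> \<inter> {v. snd v = 0} \<longleftrightarrow>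
       (\<exists>m l :: int. x = of_int m *\<^sub>R (of_nat ?L, 0::complex) + of_int l *\<^sub>R (fst \<tau>, 0::complex))"
      using mem1[OF d assms(5,6), of x n r] by (simp add: scaleR_conv_of_real mult.commute)
  next
    fix m l :: int
    show "of_int m *\<^sub>R (of_nat ?L, 0::complex) + of_int l *\<^sub>R (fst \<tau>, 0::complex) = 0 \<longrightarrow> m = 0 \<and> l = 0"
    proof
    assume "of_int m *\<^sub>R (of_nat ?L, 0::complex) + of_int l *\<^sub>R (fst \<tau>, 0::complex) = 0"
    hence eq: "of_real (of_int m * real ?L) + of_real (of_int l) * fst \<tau> = 0"
      by (simp add: scaleR_conv_of_real zero_prod_def)
    have cc: "real_of_int m * real ?L = 0 \<and> real_of_int l = 0" by (rule cz[OF assms(5) eq])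
    then show "m = 0 \<and> l = 0" using Lp d rp by auto
    qed
  next
    show "pol_form \<tau> (of_nat ?L, 0) (fst \<tau>, 0) = of_int (int ?L)"
      using assms(5) by (simp add: pol_form_def coord_a_def coord_b_def)
  qed
  let ?M = "lcm d (n div r)"
  have Mp: "?M > 0" using d nr by (simp add: lcm_pos_nat)
  show "is_k_times_unimodular (Lambda d n r \<tau> \<inter> {v. fst v = 0}) (pol_form \<tau>) (int ?M)"
    unfolding is_k_times_unimodular_def
  proof (intro exI conjI allI)
    fix x
    show "x \<in> Lambda d n r \<tau> \<inter> {v. fst v = 0} \<longleftrightarrow>
       (\<exists>m l :: int. x = of_int m *\<^sub>R (0::complex, of_nat ?M) + of_int l *\<^sub>R (0::complex, snd \<tau>))"
      using mem2[OF d assms(5,6), of x n r] by (simp add: scaleR_conv_of_real mult.commute)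
  next
    fix m l :: int
    show "of_int m *\<^sub>R (0::complex, of_nat ?M) + of_int l *\<^sub>R (0::complex, snd \<tau>) = 0 \<longrightarrow> m = 0 \<and> l = 0"
    proof
    assume "of_int m *\<^sub>R (0::complex, of_nat ?M) + of_int l *\<^sub>R (0::complex, snd \<tau>) = 0"
    hence eq: "of_real (of_int m * real ?M) + of_real (of_int l) * snd \<tau> = 0"
      by (simp add: scaleR_conv_of_real zero_prod_def)
    have cc: "real_of_int m * real ?M = 0 \<and> real_of_int l = 0" by (rule cz[OF assms(6) eq])
    then show "m = 0 \<and> l = 0" using Mp d nr by auto
    qed
  next
    show "pol_form \<tau> (0, of_nat ?M) (0, snd \<tau>) = of_int (int ?M)"
      using assms(6) by (simp add: pol_form_def coord_a_def coord_b_def)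
  qed
qed


end
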